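(* With $q$, $A=\{0=a_1<\cdots<a_m\}\subseteq\{0,\dots,q-1\}$, $F$ and $f$ as in the context, the weak limits $\nu_F=\lim_{k\to\infty}\nu_{F,k}$ and $\mu_f=\lim_{k\to\infty}\mu_{f,k}$ exist, and, viewed as probability measures on the torus $\mathbb{T}=\mathbb{R}/\mathbb{Z}$ (identified with $[0,1)$), they coincide: $\nu_F=\mu_f$.
   Context: $q\geqslant2$ is an integer, $A=\{a_1,\dots,a_m\}$ with $0=a_1<a_2<\cdots<a_m\leqslant q-1$, and $F\subseteq[0,1]$ is the set of reals with a base-$q$ expansion using only digits from $A$; $F$ is the attractor of the maps $S_i(x)=(x+a_i)/q$, $i=1,\dots,m$. For $E\subseteq[0,1]$ set $S(E)=\bigcup_{i=1}^m S_i(E)$ and let $E_k=S^k([0,1])$ ($k$-fold composition), a union of $m^k$ intervals of length $q^{-k}$. The standard mass distribution $\nu_F$ is the weak limit of the measures $\nu_{F,k}$, where $\nu_{F,0}$ is Lebesgue measure restricted to $[0,1]$ and $\nu_{F,k}=\frac{q}{m}\,\nu_{F,k-1}|_{E_k}$ for $k\geqslant1$ (i.e. $\nu_{F,k}$ is the uniform probability measure on $E_k$). The sequence $f=(f(n))_{n\geqslant0}$ is defined by $f(n)=1$ if every base-$q$ digit of $n$ lies in $A$ and $f(n)=0$ otherwise (equivalently, the fixed point starting with $1$ of the substitution $1\mapsto 1\,0^{a_2-a_1-1}1\cdots0^{a_m-a_{m-1}-1}1\,0^{q-1-a_m}$, $0\mapsto0^q$). The ghost measure $\mu_f$ is the weak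 limit of the pure point probability measures $\mu_{f,k}=m^{-k}\sum_{j=0}^{q^k-1}f(j)\,\delta_{j/q^k}$ on $\mathbb{T}$, where $\delta_x$ is the unit Dirac measure at $x$. *)

theory Defs
  imports "HOL-Probability.Probability"
begin

definition hutch :: "nat \<Rightarrow> nat set \<Rightarrow> real set \<Rightarrow> real set" where
  "hutch q A E = (\<Union>a\<in>A. (\<lambda>x. (x + real a) / real q) ` E)"

definition Ek :: "nat \<Rightarrow> nat set \<Rightarrow> nat \<Rightarrow> real set" where
  "Ek q A k = ((hutch q A) ^^ k) {0..1}"

fun nuF :: "nat \<Rightarrow> nat set \<Rightarrow> nat \<Rightarrow> real measure" where
  "nuF q A 0 = density lborel (indicator {0..1})"
| "nuF q A (Suc k) = density (nuF q A k)
      (\<lambda>x. ennreal (real q / real (card A)) * indicator (Ek q A (Suc k)) x)"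

text \<open>f(n) = 1 iff every base-q digit of n lies in A (leading zeros are harmless as 0 is in A).\<close>
definition fseq :: "nat \<Rightarrow> nat set \<Rightarrow> nat \<Rightarrow> real" where
  "fseq q A n = (if (\<forall>i. (n div q ^ i) mod q \<in> A) then 1 else 0)"

text \<open>mu_{f,k} = m^{-k} sum_{j<q^k} f(j) delta_{j/q^k}, as a measure on the Borel sets of the reals
  (all atoms lie in [0,1), the fundamental domain of the torus).\<close>
definition muf :: "nat \<Rightarrow> nat set \<Rightarrow> nat \<Rightarrow> real measure" where
  "muf q A k = distr
      (density (count_space {..<q ^ k}) (\<lambda>j. ennreal (fseq q A j / real (card A) ^ k)))
      borel (\<lambda>j. real j / real q ^ k)"

definition weak_limit :: "(nat \<Rightarrow> real measure) \<Rightarrow> real measure \<Rightarrow> bool" where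
  "weak_limit Ms M \<longleftrightarrow>
     (\<forall>g::real \<Rightarrow> real. continuous_on UNIV g \<and> bounded (range g) \<longrightarrow>
        (\<lambda>k. \<integral>x. g x \<partial>Ms k) \<longlonglongrightarrow> (\<integral>x. g x \<partial>M))"

text \<open>Weak convergence on the torus R/Z: test functions are the continuous 1-periodic functions.\<close>
definition torus_weak_limit :: "(nat \<Rightarrow> real measure) \<Rightarrow> real measure \<Rightarrow> bool" where
  "torus_weak_limit Ms M \<longleftrightarrow>
     (\<forall>g::real \<Rightarrow> real. continuous_on UNIV g \<and> (\<forall>x. g (x + 1) = g x) \<longrightarrow>
        (\<lambda>k. \<integral>x. g x \<partial>Ms k) \<longlonglongrightarrow> (\<integral>x. g x \<partial>M))"

end

theory Submission
  imports Defs
begin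
definition Dg :: "nat \<Rightarrow> nat set \<Rightarrow> nat \<Rightarrow> nat set" where
  "Dg q A k = {j. j < q^k \<and> (\<forall>i. (j div q^i) mod q \<in> A)}"

lemma digit_mod_low:
  fixes j q :: nat
  assumes "i < l" "q > 0"
  shows "((j mod q^l) div q^i) mod q = (j div q^i) mod q"
proof -
  have ql: "q^l = q^i * q^(l-i)" using assms by (simp add: power_add[symmetric])
  have "j mod q^l = q^i * (j div q^i mod q^(l-i)) + j mod q^i"
    unfolding ql by (rule mod_mult2_eq)
  then have "(j mod q^l) div q^i = j div q^i mod q^(l-i)"
    using assms by simp
  moreover have "q dvd q^(l-i)" using assms by simp
  ultimately show ?thesis by (simp add: mod_mod_cancel)
qed

lemma digit_mod_high:
  fixes j q :: nat
  assumes "l \<le> i" "q > 0"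
  shows "(j mod q^l) div q^i = 0"
proof -
  have "j mod q^l < q^l" using assms by simp
  also have "q^l \<le> q^i" using assms by (simp add: power_increasing)
  finally show ?thesis by simp
qed

lemma digit_div:
  fixes j q :: nat
  shows "(j div q^l) div q^i = j div q^(i+l)"
  by (metis div_mult2_eq power_add mult.commute)

lemma Dg_split:
  assumes "q > 0" "0 \<in> A"
  shows "j \<in> Dg q A (k+l) \<longleftrightarrow> j div q^l \<in> Dg q A k \<and> j mod q^l \<in> Dg q A l"
proof -
  have lt: "j < q^(k+l) \<longleftrightarrow> j div q^l < q^k"
    using assms by (simp add: div_less_iff_less_mult power_add)
  have "(\<forall>i. (j div q^i) mod q \<in> A) \<longleftrightarrow>
        (\<forall>i. ((j div q^l) div q^i) mod q \<in> A) \<and> (\<forall>i. ((j mod q^l) div q^i) mod q \<in> A)"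
  proof safe
    fix i assume H: "\<forall>i. (j div q^i) mod q \<in> A"
    show "((j div q^l) div q^i) mod q \<in> A" using H digit_div by metis
    show "((j mod q^l) div q^i) mod q \<in> A"
    proof (cases "i < l")
      case True then show ?thesis using H digit_mod_low assms by metis
    next
      case False then show ?thesis using digit_mod_high[of l i q j] assms by simp
    qed
  next
    fix i assume H1: "\<forall>i. ((j div q^l) div q^i) mod q \<in> A"
      and H2: "\<forall>i. ((j mod q^l) div q^i) mod q \<in> A"
    show "(j div q^i) mod q \<in> A"
    proof (cases "i < l")
      case True then show ?thesis using H2 digit_mod_low assms by metis
    next
      case False
      then have "i = (i - l) + l" by simp
      then show ?thesis using H1 digit_div by metis
    qed
  qed
  then show ?thesis using lt assms unfolding Dg_def by auto
qed

lemma Dg_finite: "finite (Dg q A k)"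
  unfolding Dg_def by auto

lemma Dg_image:
  assumes "q > 0" "0 \<in> A"
  shows "Dg q A (k+l) = (\<lambda>(a,r). a*q^l + r) ` (Dg q A k \<times> Dg q A l)"
    and "inj_on (\<lambda>(a,r). a*q^l + r) (Dg q A k \<times> Dg q A l)"
proof -
  have lt: "r \<in> Dg q A l \<Longrightarrow> r < q^l" for r unfolding Dg_def by auto
  have qp: "q^l > 0" using assms by simp
  show "inj_on (\<lambda>(a,r). a*q^l + r) (Dg q A k \<times> Dg q A l)"
  proof (rule inj_onI, clarsimp)
    fix a r a' r' assume "a \<in> Dg q A k" "r \<in> Dg q A l" "a' \<in> Dg q A k" "r' \<in> Dg q A l"
      and e: "a * q ^ l + r = a' * q ^ l + r'"
    then have "r < q^l" "r' < q^l" using lt by auto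
    then have "(a * q ^ l + r) div q^l = a" "(a' * q ^ l + r') div q^l = a'"
       "(a * q ^ l + r) mod q^l = r" "(a' * q ^ l + r') mod q^l = r'" using qp by auto
    then show "a = a' \<and> r = r'" using e by metis
  qed
  show "Dg q A (k+l) = (\<lambda>(a,r). a*q^l + r) ` (Dg q A k \<times> Dg q A l)"
  proof safe
    fix j assume "j \<in> Dg q A (k+l)"
    then have "j div q^l \<in> Dg q A k" "j mod q^l \<in> Dg q A l" using Dg_split assms by auto
    moreover have "j = (j div q^l) * q^l + j mod q^l" by (simp add: div_mult_mod_eq)
    ultimately show "j \<in> (\<lambda>(a,r). a*q^l + r) ` (Dg q A k \<times> Dg q A l)" by force
  next
    fix a r assume "a \<in> Dg q A k" "r \<in> Dg q A l"
    moreover have "r < q^l" using lt \<open>r \<in> Dg q A l\<close> by auto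
    ultimately have "(a * q ^ l + r) div q^l = a" "(a * q ^ l + r) mod q^l = r" using qp by auto
    then show "a * q ^ l + r \<in> Dg q A (k + l)"
      using Dg_split assms \<open>a \<in> Dg q A k\<close> \<open>r \<in> Dg q A l\<close> by metis
  qed
qed

lemma Dg_sum:
  assumes "q > 0" "0 \<in> A"
  shows "(\<Sum>j\<in>Dg q A (k+l). h j) = (\<Sum>a\<in>Dg q A k. \<Sum>r\<in>Dg q A l. h (a*q^l + r))"
  apply (subst Dg_image(1)[OF assms])
  apply (subst sum.reindex[OF Dg_image(2)[OF assms]])
  apply (simp add: sum.cartesian_product split_def)
  done

lemma Dg_0: "Dg q A 0 = (if 0 \<in> A then {0} else {})"
  unfolding Dg_def by auto

lemma Dg_1:
  assumes "q > 0" "0 \<in> A" "A \<subseteq> {..<q}"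
  shows "Dg q A 1 = A"
proof safe
  fix j assume "j \<in> Dg q A 1"
  then have H: "\<forall>i. (j div q^i) mod q \<in> A" and jq: "j < q" unfolding Dg_def by auto
  then have "(j div q^0) mod q \<in> A" by blast
  then show "j \<in> A" using jq by simp
next
  fix j assume j: "j \<in> A"
  then have jq: "j < q" using assms by auto
  have "(j div q^i) mod q \<in> A" for i
  proof (cases i)
    case 0 then show ?thesis using j jq by simp
  next
    case (Suc n)
    then have "q \<le> q^i" using assms by (simp add: Suc_le_eq)
    then have "j div q^i = 0" using jq by simp
    then show ?thesis using assms by simp
  qed
  then show "j \<in> Dg q A 1" using jq unfolding Dg_def by auto
qed

lemma Dg_card:
  assumes "q > 0" "0 \<in> A" "A \<subseteq> {..<q}"
  shows "card (Dg q A k) = card A ^ k"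
proof (induction k)
  case 0 then show ?case using assms by (simp add: Dg_0)
next
  case (Suc k)
  have "card (Dg q A (k+1)) = card (Dg q A k \<times> Dg q A 1)"
    unfolding Dg_image(1)[OF assms(1,2), of k 1] by (rule card_image[OF Dg_image(2)[OF assms(1,2)]])
  also have "\<dots> = card A ^ Suc k" using Suc Dg_1[OF assms] by (simp add: card_cartesian_product)
  finally show ?case by simp
qed

lemma fseq_Dg: "j < q^k \<Longrightarrow> fseq q A j = (if j \<in> Dg q A k then 1 else 0)"
  unfolding fseq_def Dg_def by auto

definition Sk :: "nat \<Rightarrow> nat set \<Rightarrow> nat \<Rightarrow> (real \<Rightarrow> real) \<Rightarrow> real" where
  "Sk q A k g = (\<Sum>j\<in>Dg q A k. g (real j / real q ^ k)) / real (card A) ^ k"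

locale digs =
  fixes q :: nat and A :: "nat set"
  assumes q2: "q \<ge> 2" and A0: "0 \<in> A" and Aq: "A \<subseteq> {..<q}"
begin

lemma qpos: "q > 0" using q2 by simp
lemma finA: "finite A" using Aq finite_subset by blast
lemma mpos: "card A > 0" using A0 finA card_gt_0_iff by blast

lemma cardD: "card (Dg q A k) = card A ^ k"
  using Dg_card[OF qpos A0 Aq] .

lemma muf_meas: "(\<lambda>j. real j / real q ^ k) \<in> measurable (count_space {..<q^k}) borel"
  by simp

lemma sum_fseq: "(\<Sum>j<q^k. fseq q A j * h j) = (\<Sum>j\<in>Dg q A k. h j)"
proof -
  have "(\<Sum>j<q^k. fseq q A j * h j) = (\<Sum>j<q^k. if j \<in> Dg q A k then h j else 0)"
    by (rule sum.cong) (auto simp: fseq_Dg)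
  also have "\<dots> = (\<Sum>j\<in>{..<q^k} \<inter> Dg q A k. h j)"
    by (simp add: sum.inter_restrict)
  also have "{..<q^k} \<inter> Dg q A k = Dg q A k" unfolding Dg_def by auto
  finally show ?thesis .
qed

lemma muf_integral:
  assumes g: "g \<in> borel_measurable borel"
  shows "integral\<^sup>L (muf q A k) g = Sk q A k g"
proof -
  have "integral\<^sup>L (muf q A k) g =
     integral\<^sup>L (density (count_space {..<q ^ k}) (\<lambda>j. ennreal (fseq q A j / real (card A) ^ k)))
       (\<lambda>j. g (real j / real q ^ k))"
    unfolding muf_def by (rule integral_distr) (auto simp: g)
  also have "\<dots> = integral\<^sup>L (count_space {..<q ^ k}) (\<lambda>j. (fseq q A j / real (card A) ^ k) *\<^sub>R g (real j / real q ^ k))"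
    by (rule integral_density) (auto simp: fseq_def)
  also have "\<dots> = (\<Sum>j<q^k. (fseq q A j / real (card A) ^ k) * g (real j / real q ^ k))"
    by (subst lebesgue_integral_count_space_finite) auto
  also have "\<dots> = (\<Sum>j<q^k. fseq q A j * (g (real j / real q ^ k) / real (card A) ^ k))"
    by (simp add: sum_divide_distrib)
  also have "\<dots> = (\<Sum>j\<in>Dg q A k. g (real j / real q ^ k) / real (card A) ^ k)"
    by (rule sum_fseq)
  also have "\<dots> = Sk q A k g" unfolding Sk_def by (simp add: sum_divide_distrib)
  finally show ?thesis .
qed

lemma muf_sets: "sets (muf q A k) = sets borel"
  unfolding muf_def by simp

lemma muf_space: "space (muf q A k) = UNIV"
  unfolding muf_def by simp

lemma muf_prob: "prob_space (muf q A k)"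
proof
  have "emeasure (muf q A k) (space (muf q A k)) =
     emeasure (density (count_space {..<q ^ k}) (\<lambda>j. ennreal (fseq q A j / real (card A) ^ k))) {..<q^k}"
    unfolding muf_def by (subst emeasure_distr) auto
  also have "\<dots> = (\<integral>\<^sup>+ j\<in>{..<q^k}. ennreal (fseq q A j / real (card A) ^ k) \<partial>count_space {..<q^k})"
    by (subst emeasure_density) auto
  also have "\<dots> = (\<Sum>j<q^k. ennreal (fseq q A j / real (card A) ^ k))"
    by (subst nn_integral_count_space_finite) (auto intro!: sum.cong)
  also have "\<dots> = ennreal (\<Sum>j<q^k. fseq q A j / real (card A) ^ k)"
    by (rule sum_ennreal) (auto simp: fseq_def)
  also have "(\<Sum>j<q^k. fseq q A j / real (card A) ^ k) = (\<Sum>j<q^k. fseq q A j * (1 / real (card A) ^ k))"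
    by (rule sum.cong) auto
  also have "\<dots> = (\<Sum>j\<in>Dg q A k. 1 / real (card A) ^ k)" by (rule sum_fseq)
  also have "\<dots> = 1" using cardD mpos by simp
  finally show "emeasure (muf q A k) (space (muf q A k)) = 1" by simp
qed

lemma muf_real_distribution: "real_distribution (muf q A k)"
  using muf_prob muf_sets by (simp add: real_distribution_def real_distribution_axioms_def)

lemma muf_AE: "AE x in muf q A k. 0 \<le> x \<and> x < 1"
  unfolding muf_def
proof (subst AE_distr_iff)
  show "AE j in density (count_space {..<q ^ k}) (\<lambda>j. ennreal (fseq q A j / real (card A) ^ k)).
        0 \<le> real j / real q ^ k \<and> real j / real q ^ k < 1"
  proof (rule AE_I2)
    fix j assume "j \<in> space (density (count_space {..<q ^ k}) (\<lambda>j. ennreal (fseq q A j / real (card A) ^ k)))"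
    then have "j < q^k" by simp
    then have "real j < real q ^ k" by (metis of_nat_less_iff of_nat_power)
    then show "0 \<le> real j / real q ^ k \<and> real j / real q ^ k < 1" using qpos by simp
  qed
qed auto

lemma muf_tight: "tight (muf q A)"
  unfolding tight_def
proof safe
  fix n show "real_distribution (muf q A n)" by (rule muf_real_distribution)
next
  fix e :: real assume e: "e > 0"
  have "1 - e < measure (muf q A n) {-1<..1}" for n
  proof -
    interpret prob_space "muf q A n" by (rule muf_prob)
    have "AE x in muf q A n. x \<in> {-1<..1::real}"
      using muf_AE[of n] by eventually_elim auto
    moreover have "{x \<in> space (muf q A n). x \<in> {-1<..1::real}} \<in> sets (muf q A n)"
      unfolding muf_sets muf_space by simp
    ultimately have "prob {x \<in> space (muf q A n). x \<in> {-1<..1::real}} = 1"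
      by (subst prob_Collect_eq_1) auto
    moreover have "{x \<in> space (muf q A n). x \<in> {-1<..1::real}} = {-1<..1}" by (auto simp: muf_space)
    ultimately have "prob {-1<..1} = 1" by simp
    then show "1 - e < measure (muf q A n) {-1<..1}" using e by simp
  qed
  then show "\<exists>a b. a < b \<and> (\<forall>n. 1 - e < measure (muf q A n) {a<..b})"
    by (intro exI[of _ "-1::real"] exI[of _ "1::real"]) auto
qed

lemma unif_cont_q:
  fixes g :: "real \<Rightarrow> real"
  assumes g: "continuous_on UNIV g" and e: "e > 0"
  shows "\<exists>K. \<forall>k\<ge>K. \<forall>x\<in>{0..1}. \<forall>y\<in>{0..1}. \<bar>x - y\<bar> \<le> 1 / real q ^ k \<longrightarrow> \<bar>g x - g y\<bar> \<le> e"
proof -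
  have "uniformly_continuous_on {0..1} g"
    by (rule compact_uniformly_continuous) (auto intro: continuous_on_subset[OF g])
  then obtain d where d: "d > 0" and
    hd: "\<And>x y. x\<in>{0..1} \<Longrightarrow> y\<in>{0..1} \<Longrightarrow> dist y x < d \<Longrightarrow> dist (g y) (g x) < e"
    unfolding uniformly_continuous_on_def using e by metis
  have q1: "1 / real q < 1" using q2 by simp
  obtain K where K: "(1 / real q) ^ K < d" using real_arch_pow_inv[OF d q1] by blast
  show ?thesis
  proof (intro exI[of _ K] allI impI ballI)
    fix k x y assume k: "K \<le> k" and x: "x \<in> {0..1::real}" and y: "y \<in> {0..1::real}"
      and xy: "\<bar>x - y\<bar> \<le> 1 / real q ^ k"
    have "(1 / real q) ^ k \<le> (1 / real q) ^ K"
      using k q2 by (intro power_decreasing) auto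
    then have "\<bar>x - y\<bar> < d" using xy K by (simp add: power_one_over)
    then have "dist (g y) (g x) < e" using hd[OF x y] by (simp add: dist_real_def abs_minus_commute)
    then show "\<bar>g x - g y\<bar> \<le> e" by (simp add: dist_real_def abs_minus_commute)
  qed
qed

lemma Sk_cauchy:
  fixes g :: "real \<Rightarrow> real"
  assumes g: "continuous_on UNIV g" and e: "e > 0"
  shows "\<exists>K. \<forall>k\<ge>K. \<forall>n\<ge>k. \<bar>Sk q A n g - Sk q A k g\<bar> \<le> e"
proof -
  obtain K where K: "\<And>k x y. k \<ge> K \<Longrightarrow> x\<in>{0..1} \<Longrightarrow> y\<in>{0..1} \<Longrightarrow> \<bar>x - y\<bar> \<le> 1 / real q ^ k \<Longrightarrow> \<bar>g x - g y\<bar> \<le> e"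
    using unif_cont_q[OF g e] by blast
  show ?thesis
  proof (intro exI[of _ K] allI impI)
    fix k n assume k: "K \<le> k" and n: "k \<le> n"
    define l where "l = n - k"
    have nkl: "n = k + l" using n l_def by simp
    define M where "M = real (card A)"
    have Mpos: "M > 0" using mpos M_def by simp
    have ltD: "j \<in> Dg q A i \<Longrightarrow> real j < real q ^ i" for j i
      unfolding Dg_def by (metis (mono_tags) mem_Collect_eq of_nat_less_iff of_nat_power)
    have "Sk q A n g = (\<Sum>a\<in>Dg q A k. \<Sum>r\<in>Dg q A l. g (real (a*q^l + r) / real q ^ (k+l))) / M ^ (k+l)"
      unfolding Sk_def nkl M_def by (subst Dg_sum[OF qpos A0]) simp
    also have "\<dots> = (\<Sum>a\<in>Dg q A k. \<Sum>r\<in>Dg q A l. g (real (a*q^l + r) / real q ^ (k+l)) / (M^k * M^l))"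
      by (simp add: sum_divide_distrib power_add)
    finally have Sn: "Sk q A n g = \<dots>" .
    have "Sk q A k g = (\<Sum>a\<in>Dg q A k. \<Sum>r\<in>Dg q A l. g (real a / real q ^ k) / (M^k * M^l))"
    proof -
      have "(\<Sum>a\<in>Dg q A k. \<Sum>r\<in>Dg q A l. g (real a / real q ^ k) / (M^k * M^l))
          = (\<Sum>a\<in>Dg q A k. g (real a / real q ^ k) / (M^k * M^l) * M^l)"
        using cardD M_def by simp
      also have "\<dots> = (\<Sum>a\<in>Dg q A k. g (real a / real q ^ k) / M^k)"
        using Mpos by (intro sum.cong) auto
      finally show ?thesis unfolding Sk_def M_def by (simp add: sum_divide_distrib)
    qed
    then have "Sk q A n g - Sk q A k g =
      (\<Sum>a\<in>Dg q A k. \<Sum>r\<in>Dg q A l. (g (real (a*q^l + r) / real q ^ (k+l)) - g (real a / real q ^ k)) / (M^k * M^l))"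
      using Sn by (simp add: sum_subtractf diff_divide_distrib)
    also have "\<bar>\<dots>\<bar> \<le> (\<Sum>a\<in>Dg q A k. \<Sum>r\<in>Dg q A l. e / (M^k * M^l))"
    proof (rule order_trans[OF sum_abs], rule sum_mono, rule order_trans[OF sum_abs], rule sum_mono)
      fix a r assume a: "a \<in> Dg q A k" and r: "r \<in> Dg q A l"
      have qk: "real q ^ k > 0" "real q ^ l > 0" using qpos by auto
      have ra: "real a < real q ^ k" using ltD[OF a] .
      have rr: "real r < real q ^ l" using ltD[OF r] .
      have eq: "real (a*q^l + r) / real q ^ (k+l) = real a / real q ^ k + real r / real q ^ (k+l)"
        using qk by (simp add: power_add field_simps)
      have x1: "real a / real q ^ k \<in> {0..1}" using ra qk by simp
      have "real r / real q ^ (k+l) \<le> 1 / real q ^ k"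
        using rr qk by (simp add: power_add field_simps)
      moreover have "real a / real q ^ k \<le> 1 - 1 / real q ^ k"
      proof -
        have "a + 1 \<le> q^k" using a unfolding Dg_def by auto
        then have "real a + 1 \<le> real q ^ k" by (metis of_nat_1 of_nat_add of_nat_le_iff of_nat_power)
        then show ?thesis using qk by (simp add: field_simps)
      qed
      ultimately have x2: "real (a*q^l + r) / real q ^ (k+l) \<in> {0..1}" unfolding eq
        using x1 qk by auto
      have "\<bar>g (real (a*q^l + r) / real q ^ (k+l)) - g (real a / real q ^ k)\<bar> \<le> e"
        apply (rule K[OF k x2 x1])
        unfolding eq using \<open>real r / real q ^ (k+l) \<le> 1 / real q ^ k\<close> qk by simp
      then show "\<bar>(g (real (a*q^l + r) / real q ^ (k+l)) - g (real a / real q ^ k)) / (M^k * M^l)\<bar> \<le> e / (M^k * M^l)"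
        using Mpos by (simp add: abs_divide divide_right_mono)
    qed
    also have "\<dots> = e" using cardD M_def Mpos by simp
    finally show "\<bar>Sk q A n g - Sk q A k g\<bar> \<le> e" .
  qed
qed

end

context digs begin

lemma cont_isCont: "continuous_on UNIV g \<Longrightarrow> isCont g x"
  using continuous_on_eq_continuous_at open_UNIV by blast

lemma cont_borel: "continuous_on UNIV (g::real\<Rightarrow>real) \<Longrightarrow> g \<in> borel_measurable borel"
  by (rule borel_measurable_continuous_onI)

lemma muf_limit:
  "\<exists>M. real_distribution M \<and>
     (\<forall>g::real\<Rightarrow>real. continuous_on UNIV g \<and> bounded (range g) \<longrightarrow> (\<lambda>k. Sk q A k g) \<longlonglongrightarrow> integral\<^sup>L M g)"
proof -
  obtain r M where r: "strict_mono (r :: nat \<Rightarrow> nat)" and M: "real_distribution M"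
    and wc: "weak_conv_m (muf q A \<circ> id \<circ> r) M"
    using tight_imp_convergent_subsubsequence[OF muf_tight, of id] by (auto simp: strict_mono_def)
  have "(\<lambda>k. Sk q A k g) \<longlonglongrightarrow> integral\<^sup>L M g"
    if g: "continuous_on UNIV g" and gb: "bounded (range g)" for g :: "real \<Rightarrow> real"
  proof -
    have "\<exists>B. \<forall>x. norm (g x) \<le> B" using gb unfolding Elementary_Metric_Spaces.bounded_iff by blast
    then obtain B where B: "\<And>x. norm (g x) \<le> B" by blast
    have "(\<lambda>n. integral\<^sup>L ((muf q A \<circ> id \<circ> r) n) g) \<longlonglongrightarrow> integral\<^sup>L M g"
      apply (rule weak_conv_imp_integral_bdd_continuous_conv[OF _ M wc])
        apply (auto simp: muf_real_distribution cont_isCont[OF g])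
      using B[simplified] by blast
    then have sub: "(\<lambda>n. Sk q A (r n) g) \<longlonglongrightarrow> integral\<^sup>L M g"
      using muf_integral[OF cont_borel[OF g]] by simp
    define L where "L = integral\<^sup>L M g"
    have close: "\<exists>K. \<forall>n\<ge>K. \<bar>Sk q A n g - L\<bar> \<le> e" if e: "e > 0" for e
    proof -
      obtain K where K: "\<And>k n. K \<le> k \<Longrightarrow> k \<le> n \<Longrightarrow> \<bar>Sk q A n g - Sk q A k g\<bar> \<le> e"
        using Sk_cauchy[OF g e] by blast
      have "\<bar>Sk q A n g - L\<bar> \<le> e" if n: "n \<ge> K" for n
      proof -
        have "(\<lambda>i. \<bar>Sk q A (r i) g - Sk q A n g\<bar>) \<longlonglongrightarrow> \<bar>L - Sk q A n g\<bar>"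
          using sub unfolding L_def by (intro tendsto_intros)
        moreover have "\<exists>N. \<forall>i\<ge>N. \<bar>Sk q A (r i) g - Sk q A n g\<bar> \<le> e"
        proof (intro exI[of _ n] allI impI)
          fix i assume "n \<le> i"
          then have "n \<le> r i" using seq_suble[OF r, of i] by simp
          then show "\<bar>Sk q A (r i) g - Sk q A n g\<bar> \<le> e" using K n by blast
        qed
        ultimately have "\<bar>L - Sk q A n g\<bar> \<le> e" by (rule LIMSEQ_le_const2)
        then show ?thesis by (simp add: abs_minus_commute)
      qed
      then show ?thesis by blast
    qed
    show ?thesis unfolding L_def[symmetric] LIMSEQ_iff
    proof (intro allI impI)
      fix e :: real assume "e > 0"
      then obtain K where "\<forall>n\<ge>K. \<bar>Sk q A n g - L\<bar> \<le> e/2" using close[of "e/2"] by auto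
      then show "\<exists>no. \<forall>n\<ge>no. norm (Sk q A n g - L) < e" using \<open>e > 0\<close> by force
    qed
  qed
  then show ?thesis using M by blast
qed

definition g0 :: "real \<Rightarrow> real" where "g0 x = min 1 (max 0 (-x) + max 0 (x - 1))"

lemma g0_cont: "continuous_on UNIV g0"
  unfolding g0_def by (intro continuous_intros)

lemma g0_bounded: "bounded (range g0)"
  unfolding bounded_iff g0_def by (intro exI[of _ 1]) auto

lemma g0_zero: "x \<in> {0..1} \<Longrightarrow> g0 x = 0"
  unfolding g0_def by auto

lemma g0_zero_iff: "g0 x = 0 \<longleftrightarrow> x \<in> {0..1}"
  unfolding g0_def by (auto simp: min_def max_def split: if_splits)

lemma Sk_g0: "Sk q A k g0 = 0"
proof -
  have "g0 (real j / real q ^ k) = 0" if "j \<in> Dg q A k" for j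
  proof (rule g0_zero)
    have "real j < real q ^ k" using that unfolding Dg_def by (metis (mono_tags) mem_Collect_eq of_nat_less_iff of_nat_power)
    then show "real j / real q ^ k \<in> {0..1}" using qpos by simp
  qed
  then show ?thesis unfolding Sk_def by simp
qed

lemma limit_support:
  assumes M: "real_distribution M"
    and lim: "(\<lambda>k. Sk q A k g0) \<longlonglongrightarrow> integral\<^sup>L M g0"
  shows "emeasure M {0..1} = 1"
proof -
  interpret real_distribution M by (rule M)
  have "integral\<^sup>L M g0 = 0" using lim Sk_g0 LIMSEQ_unique by (simp add: LIMSEQ_const_iff)
  moreover have "integrable M g0"
    by (rule integrable_const_bound[where B=1]) (auto simp: g0_def cont_borel[OF g0_cont])
  moreover have "AE x in M. 0 \<le> g0 x" by (auto simp: g0_def)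
  ultimately have "AE x in M. g0 x = 0" using integral_nonneg_eq_0_iff_AE by blast
  then have "AE x in M. x \<in> {0..1}" by (simp add: g0_zero_iff)
  then have "prob {x \<in> space M. x \<in> {0..1::real}} = 1"
    by (subst prob_Collect_eq_1) auto
  moreover have "{x \<in> space M. x \<in> {0..1::real}} = {0..1}" by auto
  ultimately show ?thesis by (simp add: emeasure_eq_measure)
qed

end

definition Iv :: "nat \<Rightarrow> nat \<Rightarrow> nat \<Rightarrow> real set" where
  "Iv q k j = {real j / real q ^ k .. (real j + 1) / real q ^ k}"

lemma img_aff:
  fixes Q b s t :: real
  assumes "Q > 0" "s \<le> t"
  shows "(\<lambda>x. (x + b) / Q) ` {s..t} = {(s+b)/Q..(t+b)/Q}"
proof -
  have f: "(\<lambda>x. (x + b) / Q) = (\<lambda>x. x / Q + b / Q)" by (simp add: add_divide_distrib)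
  show ?thesis unfolding f using image_affinity_atLeastAtMost_div[of Q "b/Q" s t] assms
    by (simp add: add_divide_distrib)
qed

lemma hutch_mono: "E \<subseteq> E' \<Longrightarrow> hutch q A E \<subseteq> hutch q A E'"
  unfolding hutch_def by blast

lemma Ek_0: "Ek q A 0 = {0..1}" unfolding Ek_def by simp
lemma Ek_Suc: "Ek q A (Suc k) = hutch q A (Ek q A k)" unfolding Ek_def by simp

context digs begin

lemma hutch01: "hutch q A {0..1} \<subseteq> {0..1}"
proof
  fix y assume "y \<in> hutch q A {0..1}"
  then obtain a x where a: "a \<in> A" and x: "x \<in> {0..1::real}" and y: "y = (x + real a) / real q"
    unfolding hutch_def by blast
  have "a + 1 \<le> q" using a Aq by auto
  then have "real a + 1 \<le> real q" by linarith
  then have "x + real a \<le> real q" using x by auto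
  then show "y \<in> {0..1}" using y x qpos by auto
qed

lemma Ek_sub_Suc: "Ek q A (Suc k) \<subseteq> Ek q A k"
proof (induction k)
  case 0 then show ?case using hutch01 by (simp add: Ek_Suc Ek_0)
next
  case (Suc k) then show ?case unfolding Ek_Suc[of q A "Suc k"] Ek_Suc[of q A k] by (rule hutch_mono)
qed

lemma Ek_01: "Ek q A k \<subseteq> {0..1}"
proof (induction k)
  case 0 then show ?case by (simp add: Ek_0)
next
  case (Suc k) then show ?case using Ek_sub_Suc by blast
qed

lemma Ek_eq: "Ek q A k = (\<Union>j\<in>Dg q A k. Iv q k j)"
proof (induction k)
  case 0 then show ?case using A0 by (simp add: Ek_0 Dg_0 Iv_def)
next
  case (Suc k)
  have Q: "real q ^ k > 0" using qpos by simp
  have img: "(\<lambda>x. (x + real a) / real q) ` Iv q k j = Iv q (Suc k) (a * q^k + j)" for a j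
  proof -
    have "(\<lambda>x. (x + real a) / real q) ` Iv q k j
       = {(real j / real q ^ k + real a) / real q .. ((real j + 1) / real q ^ k + real a) / real q}"
      unfolding Iv_def using Q qpos by (intro img_aff) (auto simp: divide_right_mono)
    also have "\<dots> = Iv q (Suc k) (a * q^k + j)"
      unfolding Iv_def using Q qpos by (simp add: field_simps)
    finally show ?thesis .
  qed
  have "Ek q A (Suc k) = (\<Union>a\<in>A. (\<lambda>x. (x + real a) / real q) ` (\<Union>j\<in>Dg q A k. Iv q k j))"
    unfolding Ek_Suc Suc hutch_def ..
  also have "\<dots> = (\<Union>a\<in>A. \<Union>j\<in>Dg q A k. Iv q (Suc k) (a * q^k + j))"
    by (simp add: image_UN img)
  also have "\<dots> = (\<Union>j\<in>Dg q A (Suc k). Iv q (Suc k) j)"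
    using Dg_image(1)[OF qpos A0, of 1 k] Dg_1[OF qpos A0 Aq] by auto
  finally show ?case .
qed

lemma Ek_closed: "closed (Ek q A k)"
  unfolding Ek_eq Iv_def by (intro closed_UN Dg_finite) auto

lemma Ek_compact: "compact (Ek q A k)"
  using Ek_closed Ek_01 by (metis bounded_closed_interval bounded_subset compact_eq_bounded_closed)

lemma Ek_borel[measurable]: "Ek q A k \<in> sets borel"
  using Ek_closed by (rule borel_closed)

definition cc :: real where "cc = real q / real (card A)"

lemma cc_pos: "cc > 0" unfolding cc_def using qpos mpos by simp

lemma nuF_density: "nuF q A k = density lborel (\<lambda>x. ennreal (cc^k * indicator (Ek q A k) x))"
proof (induction k)
  case 0 then show ?case by (simp add: Ek_0 ennreal_indicator)
next
  case (Suc k)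
  have "nuF q A (Suc k) = density (density lborel (\<lambda>x. ennreal (cc^k * indicator (Ek q A k) x)))
      (\<lambda>x. ennreal cc * indicator (Ek q A (Suc k)) x)"
    by (simp add: Suc cc_def)
  also have "\<dots> = density lborel (\<lambda>x. ennreal (cc^k * indicator (Ek q A k) x) * (ennreal cc * indicator (Ek q A (Suc k)) x))"
    by (rule density_density_eq) auto
  also have "\<dots> = density lborel (\<lambda>x. ennreal (cc^Suc k * indicator (Ek q A (Suc k)) x))"
  proof (rule density_cong)
    show "(\<lambda>x. ennreal (cc^k * indicator (Ek q A k) x) * (ennreal cc * indicator (Ek q A (Suc k)) x)) \<in> borel_measurable lborel"
      by auto
    show "(\<lambda>x. ennreal (cc^Suc k * indicator (Ek q A (Suc k)) x)) \<in> borel_measurable lborel"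
      by auto
    show "AE x in lborel. ennreal (cc^k * indicator (Ek q A k) x) * (ennreal cc * indicator (Ek q A (Suc k)) x)
        = ennreal (cc^Suc k * indicator (Ek q A (Suc k)) x)"
    proof (rule AE_I2)
      fix x
      show "ennreal (cc^k * indicator (Ek q A k) x) * (ennreal cc * indicator (Ek q A (Suc k)) x)
        = ennreal (cc^Suc k * indicator (Ek q A (Suc k)) x)"
      proof (cases "x \<in> Ek q A (Suc k)")
        case True
        then have "x \<in> Ek q A k" using Ek_sub_Suc by blast
        then show ?thesis using True cc_pos by (simp add: ennreal_mult'' mult.commute)
      next
        case False then show ?thesis by simp
      qed
    qed
  qed
  finally show ?case .
qed

lemma nuF_integral:
  fixes g :: "real \<Rightarrow> real"
  assumes g: "continuous_on UNIV g"
  shows "integral\<^sup>L (nuF q A k) g = cc^k * integral (Ek q A k) g"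
proof -
  have gm: "g \<in> borel_measurable lborel" using cont_borel[OF g] by simp
  have "integral\<^sup>L (nuF q A k) g = (\<integral>x. (cc^k * indicator (Ek q A k) x) *\<^sub>R g x \<partial>lborel)"
    unfolding nuF_density by (rule integral_density) (auto simp: gm cc_pos less_imp_le cont_borel[OF g])
  also have "\<dots> = (\<integral>x. cc^k * (indicator (Ek q A k) x *\<^sub>R g x) \<partial>lborel)"
    by (simp add: mult.assoc)
  also have "\<dots> = cc^k * (LINT x:Ek q A k|lborel. g x)"
    unfolding set_lebesgue_integral_def by simp
  also have "(LINT x:Ek q A k|lborel. g x) = integral (Ek q A k) g"
  proof (rule set_borel_integral_eq_integral(2))
    show "set_integrable lborel (Ek q A k) g"
      unfolding set_integrable_def
      by (rule borel_integrable_compact[OF Ek_compact continuous_on_subset[OF g]]) auto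
  qed
  finally show ?thesis .
qed

lemma Iv_inter:
  assumes "i \<noteq> i'"
  shows "Iv q k i \<inter> Iv q k i' \<subseteq> {real i / real q ^ k, real i' / real q ^ k}"
proof
  have Q: "real q ^ k > 0" using qpos by simp
  fix x assume x: "x \<in> Iv q k i \<inter> Iv q k i'"
  show "x \<in> {real i / real q ^ k, real i' / real q ^ k}"
  proof (cases "i < i'")
    case True
    then have "real i + 1 \<le> real i'" by linarith
    then have "(real i + 1) / real q ^ k \<le> real i' / real q ^ k" using Q by (simp add: divide_right_mono)
    then show ?thesis using x unfolding Iv_def by auto
  next
    case False
    then have "real i' + 1 \<le> real i" using assms by linarith
    then have "(real i' + 1) / real q ^ k \<le> real i / real q ^ k" using Q by (simp add: divide_right_mono)
    then show ?thesis using x unfolding Iv_def by auto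
  qed
qed

lemma Ek_integral:
  fixes g :: "real \<Rightarrow> real"
  assumes g: "continuous_on UNIV g"
  shows "integral (Ek q A k) g = (\<Sum>j\<in>Dg q A k. integral (Iv q k j) g)"
proof -
  have "(g has_integral (\<Sum>j\<in>Dg q A k. integral (Iv q k j) g)) (\<Union>j\<in>Dg q A k. Iv q k j)"
  proof (rule has_integral_UN[of "Dg q A k" g "\<lambda>j. integral (Iv q k j) g" "Iv q k"])
    show "finite (Dg q A k)" by (rule Dg_finite)
    fix j show "(g has_integral integral (Iv q k j) g) (Iv q k j)"
      unfolding Iv_def by (intro integrable_integral integrable_continuous_interval continuous_on_subset[OF g]) auto
  next
    show "pairwise (\<lambda>i i'. negligible (Iv q k i \<inter> Iv q k i')) (Dg q A k)"
      unfolding pairwise_def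
      by (auto intro: negligible_subset[OF negligible_finite Iv_inter])
  qed
  then show ?thesis unfolding Ek_eq by (rule integral_unique)
qed

lemma nuF_close:
  fixes g :: "real \<Rightarrow> real"
  assumes g: "continuous_on UNIV g" and e: "e > 0"
  shows "\<exists>K. \<forall>k\<ge>K. \<bar>integral\<^sup>L (nuF q A k) g - Sk q A k g\<bar> \<le> e"
proof -
  obtain K where K: "\<And>k x y. k \<ge> K \<Longrightarrow> x\<in>{0..1} \<Longrightarrow> y\<in>{0..1} \<Longrightarrow> \<bar>x - y\<bar> \<le> 1 / real q ^ k \<Longrightarrow> \<bar>g x - g y\<bar> \<le> e"
    using unif_cont_q[OF g e] by blast
  show ?thesis
  proof (intro exI[of _ K] allI impI)
    fix k assume k: "K \<le> k"
    define Q where "Q = real q ^ k"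
    define M where "M = real (card A)"
    have Q: "Q > 0" unfolding Q_def using qpos by simp
    have Mp: "M > 0" unfolding M_def using mpos by simp
    have ccQ: "cc^k = Q / M^k" unfolding cc_def Q_def M_def by (simp add: power_divide)
    have ltD: "real j + 1 \<le> Q" if jD: "j \<in> Dg q A k" for j
    proof -
      have "j + 1 \<le> q^k" using jD unfolding Dg_def by auto
      then have "real (j + 1) \<le> real (q^k)" by (simp only: of_nat_le_iff)
      then show ?thesis unfolding Q_def by simp
    qed
    have Ivj: "Iv q k j = {real j / Q .. (real j + 1) / Q}" for j unfolding Iv_def Q_def ..
    have trm: "cc^k * integral (Iv q k j) g - g (real j / Q) / M^k
        = cc^k * integral (Iv q k j) (\<lambda>x. g x - g (real j / Q))" for j
    proof -
      have int1: "g integrable_on Iv q k j" unfolding Ivj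
        by (intro integrable_continuous_interval continuous_on_subset[OF g]) auto
      have "integral (Iv q k j) (\<lambda>x. g x - g (real j / Q)) = integral (Iv q k j) g - integral (Iv q k j) (\<lambda>x. g (real j / Q))"
        by (rule integral_diff[OF int1]) (simp add: Ivj integrable_const_ivl)
      also have "integral (Iv q k j) (\<lambda>x. g (real j / Q)) = g (real j / Q) / Q"
        unfolding Ivj using Q by (simp add: field_simps)
      finally have "integral (Iv q k j) g = integral (Iv q k j) (\<lambda>x. g x - g (real j / Q)) + g (real j / Q) / Q"
        by simp
      then show ?thesis using Q Mp by (simp add: ccQ field_simps)
    qed
    have bnd: "\<bar>integral (Iv q k j) (\<lambda>x. g x - g (real j / Q))\<bar> \<le> e * (1 / Q)" if j: "j \<in> Dg q A k" for j
    proof -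
      have "norm (integral {real j / Q .. (real j + 1) / Q} (\<lambda>x. g x - g (real j / Q))) \<le> e * ((real j + 1) / Q - real j / Q)"
      proof (rule integral_bound)
        show "real j / Q \<le> (real j + 1) / Q" using Q by (simp add: divide_right_mono)
        show "continuous_on {real j / Q..(real j + 1) / Q} (\<lambda>x. g x - g (real j / Q))"
          by (intro continuous_intros continuous_on_subset[OF g]) auto
        fix t assume t: "t \<in> {real j / Q..(real j + 1) / Q}"
        have jQ: "(real j + 1) / Q \<le> 1" using ltD[OF j] Q by simp
        have j0: "0 \<le> real j / Q" using Q by simp
        have t01: "t \<in> {0..1}" using t jQ j0 unfolding atLeastAtMost_iff by linarith
        have j01: "real j / Q \<in> {0..1}" using jQ Q by (auto simp: divide_right_mono intro: order_trans[of _ "(real j + 1) / Q"])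
        have jj: "(real j + 1)/Q = real j / Q + 1/Q" by (simp add: add_divide_distrib)
        have "\<bar>t - real j / Q\<bar> \<le> 1 / Q" using t jj unfolding atLeastAtMost_iff by arith
        then show "norm (g t - g (real j / Q)) \<le> e" using K[OF k t01 j01] unfolding Q_def by simp
      qed
      then show ?thesis unfolding Ivj using Q by (simp add: field_simps)
    qed
    have "integral\<^sup>L (nuF q A k) g - Sk q A k g
        = (\<Sum>j\<in>Dg q A k. cc^k * integral (Iv q k j) g - g (real j / Q) / M^k)"
      unfolding nuF_integral[OF g] Ek_integral[OF g] Sk_def Q_def M_def
      by (simp add: sum_distrib_left sum_subtractf sum_divide_distrib)
    also have "\<dots> = (\<Sum>j\<in>Dg q A k. cc^k * integral (Iv q k j) (\<lambda>x. g x - g (real j / Q)))"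
      using trm by simp
    also have "\<bar>\<dots>\<bar> \<le> (\<Sum>j\<in>Dg q A k. cc^k * (e * (1 / Q)))"
    proof (rule order_trans[OF sum_abs], rule sum_mono)
      fix j assume "j \<in> Dg q A k"
      then have "\<bar>integral (Iv q k j) (\<lambda>x. g x - g (real j / Q))\<bar> \<le> e * (1 / Q)" by (rule bnd)
      then have "cc^k * \<bar>integral (Iv q k j) (\<lambda>x. g x - g (real j / Q))\<bar> \<le> cc^k * (e * (1 / Q))"
        using cc_pos by (intro mult_left_mono) auto
      then show "\<bar>cc^k * integral (Iv q k j) (\<lambda>x. g x - g (real j / Q))\<bar> \<le> cc^k * (e * (1 / Q))"
        using cc_pos by (simp add: abs_mult)
    qed
    also have "\<dots> = e" using cardD ccQ Q Mp unfolding M_def by simp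
    finally show "\<bar>integral\<^sup>L (nuF q A k) g - Sk q A k g\<bar> \<le> e" .
  qed
qed

end

lemma frac_meas: "frac \<in> borel_measurable (borel :: real measure)"
  unfolding frac_def by measurable

lemma periodic_int:
  fixes g :: "real \<Rightarrow> real"
  assumes p: "\<And>x. g (x + 1) = g x"
  shows "g (x - real_of_int z) = g x"
proof -
  have n: "g (y + real n) = g y" for y n
  proof (induction n)
    case 0 show ?case by simp
  next
    case (Suc n)
    have e: "y + real (Suc n) = (y + real n) + 1" by simp
    have "g (y + real (Suc n)) = g ((y + real n) + 1)" by (simp only: e)
    also have "\<dots> = g (y + real n)" by (rule p)
    finally show ?case using Suc by simp
  qed
  show ?thesis
  proof (cases "z \<ge> 0")
    case True
    then obtain n where "z = int n" by (metis nonneg_int_cases)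
    then show ?thesis using n[of "x - real n" n] by simp
  next
    case False
    then obtain n where "z = - int n" by (metis nonpos_int_cases linorder_not_le less_imp_le)
    then show ?thesis using n[of x n] by simp
  qed
qed

lemma periodic_frac:
  fixes g :: "real \<Rightarrow> real"
  assumes p: "\<And>x. g (x + 1) = g x"
  shows "g (frac x) = g x"
  unfolding frac_def by (rule periodic_int[of g, OF p])

lemma periodic_bounded:
  fixes g :: "real \<Rightarrow> real"
  assumes g: "continuous_on UNIV g" and p: "\<And>x. g (x + 1) = g x"
  shows "bounded (range g)"
proof -
  have "range g \<subseteq> g ` {0..1}"
  proof
    fix y assume "y \<in> range g"
    then obtain x where "y = g x" by blast
    then have "y = g (frac x)" using periodic_frac[of g, OF p] by simp
    moreover have "frac x \<in> {0..1}" using frac_lt_1[of x] frac_ge_0[of x] by simp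
    ultimately show "y \<in> g ` {0..1}" by blast
  qed
  moreover have "compact (g ` {0..1})"
    by (rule compact_continuous_image[OF continuous_on_subset[OF g]]) auto
  ultimately show ?thesis using compact_imp_bounded bounded_subset by blast
qed

theorem theorem2:
  fixes q :: nat and A :: "nat set"
  assumes "q \<ge> 2" and "0 \<in> A" and "A \<subseteq> {..<q}"
  shows "\<exists>\<nu> \<mu>. prob_space \<nu> \<and> sets \<nu> = sets borel \<and> \<nu> {0..1} = 1
           \<and> weak_limit (nuF q A) \<nu>
           \<and> prob_space \<mu> \<and> sets \<mu> = sets borel \<and> \<mu> {0..<1} = 1
           \<and> torus_weak_limit (muf q A) \<mu>
           \<and> distr \<nu> borel frac = \<mu>"
proof -
  interpret digs q A using assms by unfold_locales
  obtain M where M: "real_distribution M"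
    and lim: "\<And>g::real\<Rightarrow>real. continuous_on UNIV g \<Longrightarrow> bounded (range g) \<Longrightarrow>
                (\<lambda>k. Sk q A k g) \<longlonglongrightarrow> integral\<^sup>L M g"
    using muf_limit by blast
  interpret Mr: real_distribution M by (rule M)
  have sM: "sets M = sets borel" by simp
  have M01: "emeasure M {0..1} = 1"
    by (rule limit_support[OF M lim[OF g0_cont g0_bounded]])
  have wl: "weak_limit (nuF q A) M"
    unfolding weak_limit_def
  proof (intro allI impI)
    fix g :: "real \<Rightarrow> real" assume "continuous_on UNIV g \<and> bounded (range g)"
    then have g: "continuous_on UNIV g" and gb: "bounded (range g)" by auto
    have d: "(\<lambda>k. integral\<^sup>L (nuF q A k) g - Sk q A k g) \<longlonglongrightarrow> 0"
      unfolding LIMSEQ_iff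
    proof (intro allI impI)
      fix e :: real assume e: "e > 0"
      then obtain K where "\<forall>k\<ge>K. \<bar>integral\<^sup>L (nuF q A k) g - Sk q A k g\<bar> \<le> e/2"
        using nuF_close[OF g, of "e/2"] by auto
      then show "\<exists>no. \<forall>n\<ge>no. norm (integral\<^sup>L (nuF q A n) g - Sk q A n g - 0) < e"
        using e by force
    qed
    have "(\<lambda>k. (integral\<^sup>L (nuF q A k) g - Sk q A k g) + Sk q A k g) \<longlonglongrightarrow> 0 + integral\<^sup>L M g"
      by (rule tendsto_add[OF d lim[OF g gb]])
    then show "(\<lambda>k. integral\<^sup>L (nuF q A k) g) \<longlonglongrightarrow> integral\<^sup>L M g" by simp
  qed
  have fM: "frac \<in> borel_measurable M" using frac_meas measurable_cong_sets[OF sM refl] by blast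
  define \<mu> where "\<mu> = distr M borel frac"
  have pmu: "prob_space \<mu>" unfolding \<mu>_def by (rule Mr.prob_space_distr[OF fM])
  have smu: "sets \<mu> = sets borel" unfolding \<mu>_def by simp
  have mu01: "\<mu> {0..<1} = 1"
  proof -
    have "\<mu> {0..<1} = emeasure M (frac -` {0..<1} \<inter> space M)"
      unfolding \<mu>_def by (rule emeasure_distr) (auto simp: fM)
    also have "frac -` {0..<1} \<inter> space M = space M"
      using frac_lt_1 frac_ge_0 by auto
    finally show ?thesis using Mr.emeasure_space_1 by simp
  qed
  have twl: "torus_weak_limit (muf q A) \<mu>"
    unfolding torus_weak_limit_def
  proof (intro allI impI)
    fix g :: "real \<Rightarrow> real" assume "continuous_on UNIV g \<and> (\<forall>x. g (x + 1) = g x)"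
    then have g: "continuous_on UNIV g" and p: "\<And>x. g (x + 1) = g x" by auto
    have "integral\<^sup>L \<mu> g = integral\<^sup>L M (\<lambda>x. g (frac x))"
      unfolding \<mu>_def by (rule integral_distr) (auto simp: fM cont_borel[OF g])
    also have "\<dots> = integral\<^sup>L M g" using periodic_frac[of g, OF p] by simp
    finally have "integral\<^sup>L \<mu> g = integral\<^sup>L M g" .
    moreover have "(\<lambda>k. integral\<^sup>L (muf q A k) g) = (\<lambda>k. Sk q A k g)"
      using muf_integral[OF cont_borel[OF g]] by simp
    ultimately show "(\<lambda>k. integral\<^sup>L (muf q A k) g) \<longlonglongrightarrow> integral\<^sup>L \<mu> g"
      using lim[OF g periodic_bounded[OF g p]] by simp
  qed
  show ?thesis
    using Mr.prob_space_axioms sM M01 wl pmu smu mu01 twl unfolding \<mu>_def by blast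
qed

end
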